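(* Let $X$ be a reflexive complex Banach space, let $A$ be a positive self-adjoint operator from $X$ to $X^\ast$, and let $E$ be a bounded linear operator on $X$ such that $E(\operatorname{dom}A)\subseteq\operatorname{dom}A$ and $E^\ast A\subseteq AE$. Then the assignment $\hat E(Ax):=AEx$ ($x\in\operatorname{dom}A$) gives a well-defined linear operator $\hat E$ on $\operatorname{ran}A$, and $\hat E$ is bounded with respect to the norm of $H_A$.
   Context: $X^\ast$ denotes the conjugate dual of $X$ (continuous conjugate-linear functionals on $X$); $X$ is identified with $X^{\ast\ast}$. For $v\in X^\ast$, $x\in X$ write $(v,x):=v(x)$ and $(x,v):=\overline{v(x)}$. An operator $A$ from $X$ to $X^\ast$ is positive if $(Ax,x)\ge0$ for all $x\in\operatorname{dom}A$; its adjoint $A^\ast$ has domain $\{y\in X:x\mapsto(Ax,y)\text{ continuous on }\operatorname{dom}A\}$ and is determined by $(x,A^\ast y)=(Ax,y)$; $A$ is self-adjoint if $A=A^\ast$. For a bounded operator $E$ on $X$, $E^\ast$ is the bounded operator on $X^\ast$ with $(E^\ast v,x)=(v,Ex)$. $H_A$ is the completion of $\operatorname{ran}A$ with respect to the inner product $[Ax,Ay]_A:=(Ax,y)$ (well defined and positive definite on $\operatorname{ran}A$). *)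

theory Defs
  imports "HOL-Analysis.Analysis"
begin

text \<open>A complex Banach space is modelled as a real Banach space (type class banach)
  together with a complex scalar multiplication sm extending the real one and
  compatible with the norm.\<close>

definition complex_scaling :: "(complex \<Rightarrow> 'a::real_normed_vector \<Rightarrow> 'a) \<Rightarrow> bool" where
  "complex_scaling sm \<longleftrightarrow>
     (\<forall>c x y. sm c (x + y) = sm c x + sm c y) \<and>
     (\<forall>a b x. sm (a + b) x = sm a x + sm b x) \<and>
     (\<forall>a b x. sm (a * b) x = sm a (sm b x)) \<and>
     (\<forall>r x. sm (complex_of_real r) x = r *\<^sub>R x) \<and>
     (\<forall>c x. norm (sm c x) = cmod c * norm x)"

definition cdual :: "(complex \<Rightarrow> 'a::real_normed_vector \<Rightarrow> 'a) \<Rightarrow> ('a \<Rightarrow> complex) set" where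
  "cdual sm = {v. (\<forall>x y. v (x + y) = v x + v y) \<and> (\<forall>c x. v (sm c x) = cnj c * v x) \<and>
                  (\<exists>K. \<forall>x. cmod (v x) \<le> K * norm x)}"

definition dnorm :: "('a::real_normed_vector \<Rightarrow> complex) \<Rightarrow> real" where
  "dnorm v = Sup ((\<lambda>x. cmod (v x)) ` {x. norm x \<le> 1})"

text \<open>Reflexivity: every continuous conjugate-linear functional on the conjugate dual is
  of the form v \<mapsto> (x, v) = cnj (v x), i.e. the canonical map X \<rightarrow> X** is onto.\<close>

definition reflexive_space :: "(complex \<Rightarrow> 'a::real_normed_vector \<Rightarrow> 'a) \<Rightarrow> bool" where
  "reflexive_space sm \<longleftrightarrow>
     (\<forall>\<phi> :: ('a \<Rightarrow> complex) \<Rightarrow> complex.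
        (\<forall>v\<in>cdual sm. \<forall>w\<in>cdual sm. \<phi> (\<lambda>x. v x + w x) = \<phi> v + \<phi> w) \<longrightarrow>
        (\<forall>v\<in>cdual sm. \<forall>c. \<phi> (\<lambda>x. c * v x) = cnj c * \<phi> v) \<longrightarrow>
        (\<exists>K. \<forall>v\<in>cdual sm. cmod (\<phi> v) \<le> K * dnorm v) \<longrightarrow>
        (\<exists>x. \<forall>v\<in>cdual sm. \<phi> v = cnj (v x)))"

definition lin_op_dual :: "(complex \<Rightarrow> 'a::real_normed_vector \<Rightarrow> 'a) \<Rightarrow> 'a set \<Rightarrow> ('a \<Rightarrow> 'a \<Rightarrow> complex) \<Rightarrow> bool" where
  "lin_op_dual sm D A \<longleftrightarrow>
     0 \<in> D \<and> (\<forall>x\<in>D. \<forall>y\<in>D. x + y \<in> D) \<and> (\<forall>c. \<forall>x\<in>D. sm c x \<in> D) \<and>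
     (\<forall>x\<in>D. A x \<in> cdual sm) \<and>
     (\<forall>x\<in>D. \<forall>y\<in>D. A (x + y) = (\<lambda>z. A x z + A y z)) \<and>
     (\<forall>c. \<forall>x\<in>D. A (sm c x) = (\<lambda>z. c * A x z))"

definition positive_op :: "'a set \<Rightarrow> ('a \<Rightarrow> 'a \<Rightarrow> complex) \<Rightarrow> bool" where
  "positive_op D A \<longleftrightarrow> (\<forall>x\<in>D. Im (A x x) = 0 \<and> Re (A x x) \<ge> 0)"

text \<open>Graph of the adjoint A*: pairs (y, w), w \<in> X*, with (x, w) = (Ax, y) for all x in dom A,
  i.e. cnj (w x) = A x y.  (Its domain consists exactly of the y for which x \<mapsto> (Ax,y) is
  continuous on dom A, by Hahn-Banach.)  Self-adjointness A = A* is equality of graphs.\<close>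

definition adjoint_graph :: "(complex \<Rightarrow> 'a::real_normed_vector \<Rightarrow> 'a) \<Rightarrow> 'a set \<Rightarrow> ('a \<Rightarrow> 'a \<Rightarrow> complex) \<Rightarrow> ('a \<times> ('a \<Rightarrow> complex)) set" where
  "adjoint_graph sm D A = {(y, w). w \<in> cdual sm \<and> (\<forall>x\<in>D. cnj (w x) = A x y)}"

definition self_adjoint_op :: "(complex \<Rightarrow> 'a::real_normed_vector \<Rightarrow> 'a) \<Rightarrow> 'a set \<Rightarrow> ('a \<Rightarrow> 'a \<Rightarrow> complex) \<Rightarrow> bool" where
  "self_adjoint_op sm D A \<longleftrightarrow> adjoint_graph sm D A = {(x, A x) | x. x \<in> D}"

definition bounded_clinear_op :: "(complex \<Rightarrow> 'a::real_normed_vector \<Rightarrow> 'a) \<Rightarrow> ('a \<Rightarrow> 'a) \<Rightarrow> bool" where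
  "bounded_clinear_op sm E \<longleftrightarrow> bounded_linear E \<and> (\<forall>c x. E (sm c x) = sm c (E x))"

text \<open>Norm of H_A on ran A: \<parallel>Ax\<parallel>_A = sqrt (Ax, x).\<close>

definition HA_norm :: "('a \<Rightarrow> 'a \<Rightarrow> complex) \<Rightarrow> 'a \<Rightarrow> real" where
  "HA_norm A x = sqrt (Re (A x x))"

end

theory Submission
  imports Defs
begin

lemma quad_disc:
  fixes a b w :: real
  assumes "\<And>t. 0 \<le> a + 2*t*w + t^2*b" and "b \<ge> 0"
  shows "w^2 \<le> a*b"
proof (cases "b > 0")
  case True
  have "0 \<le> a + 2*(-w/b)*w + (-w/b)^2*b" using assms(1) .
  also have "\<dots> = a - w^2/b" using True by (simp add: power2_eq_square field_simps)
  finally have "w^2/b \<le> a" by simp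
  then show ?thesis using True by (simp add: field_simps mult.commute)
next
  case False
  then have b0: "b = 0" using assms(2) by simp
  show ?thesis
  proof (cases "w = 0")
    case True then show ?thesis using b0 by simp
  next
    case False
    have "0 \<le> a + 2*(-(a+1)/(2*w))*w + (-(a+1)/(2*w))^2*b" using assms(1) .
    also have "\<dots> = -1" using False b0 by (simp add: field_simps)
    finally show ?thesis by simp
  qed
qed

lemma cs_real:
  assumes lin: "lin_op_dual sm D A" and pos: "positive_op D A"
    and u: "u \<in> D" and v: "v \<in> D" and sym: "A u v = A v u" and im: "Im (A u v) = 0"
  shows "(Re (A u v))^2 \<le> Re (A u u) * Re (A v v)"
proof (rule quad_disc)
  show "0 \<le> Re (A v v)" using pos v unfolding positive_op_def by blast
  fix t :: real
  let ?c = "complex_of_real t"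
  have sv: "sm ?c v \<in> D" using lin v unfolding lin_op_dual_def by blast
  have w: "u + sm ?c v \<in> D" using lin u sv unfolding lin_op_dual_def by blast
  have "0 \<le> Re (A (u + sm ?c v) (u + sm ?c v))" using pos w unfolding positive_op_def by blast
  also have "A (u + sm ?c v) (u + sm ?c v) = A u u + ?c * A u v + ?c * A v u + ?c*?c * A v v"
  proof -
    have cu: "A u \<in> cdual sm" "A v \<in> cdual sm" using lin u v unfolding lin_op_dual_def by auto
    have "A (u + sm ?c v) = (\<lambda>z. A u z + A (sm ?c v) z)" using lin u sv unfolding lin_op_dual_def by auto
    also have "A (sm ?c v) = (\<lambda>z. ?c * A v z)" using lin v unfolding lin_op_dual_def by auto
    finally have e: "A (u + sm ?c v) = (\<lambda>z. A u z + ?c * A v z)" .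
    show ?thesis using cu unfolding e cdual_def by (simp add: algebra_simps)
  qed
  also have "Re (A u u + ?c * A u v + ?c * A v u + ?c*?c * A v v)
      = Re (A u u) + 2*t*Re (A u v) + t^2 * Re (A v v)"
    using sym by (simp add: power2_eq_square algebra_simps)
  finally show "0 \<le> Re (A u u) + 2*t*Re (A u v) + t^2 * Re (A v v)" .
qed

theorem lemma4:
  fixes sm :: "complex \<Rightarrow> 'a::banach \<Rightarrow> 'a"
    and D :: "'a set" and A :: "'a \<Rightarrow> 'a \<Rightarrow> complex" and E :: "'a \<Rightarrow> 'a"
  assumes "complex_scaling sm"
    and "reflexive_space sm"
    and "lin_op_dual sm D A"
    and "positive_op D A"
    and "self_adjoint_op sm D A"
    and "bounded_clinear_op sm E"
    and "E ` D \<subseteq> D"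
    and "\<forall>x\<in>D. E x \<in> D \<and> (\<lambda>z. A x (E z)) = A (E x)"
  shows "\<exists>Eh :: ('a \<Rightarrow> complex) \<Rightarrow> ('a \<Rightarrow> complex).
           (\<forall>x\<in>D. Eh (A x) = A (E x)) \<and>
           (\<forall>u\<in>A ` D. \<forall>v\<in>A ` D. Eh (\<lambda>z. u z + v z) = (\<lambda>z. Eh u z + Eh v z)) \<and>
           (\<forall>c. \<forall>u\<in>A ` D. Eh (\<lambda>z. c * u z) = (\<lambda>z. c * Eh u z)) \<and>
           (\<exists>C\<ge>0. \<forall>x\<in>D. HA_norm A (E x) \<le> C * HA_norm A x)"
proof -
  note lin = assms(3) and pos = assms(4)
  have hyp: "\<And>x z. x \<in> D \<Longrightarrow> A x (E z) = A (E x) z"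
    using assms(8) by (metis)
  have ED: "\<And>x. x \<in> D \<Longrightarrow> E x \<in> D" using assms(7) by blast
  have EkD: "(E^^k) x \<in> D" if "x \<in> D" for k x
    using that by (induction k) (auto intro: ED)
  have symm: "A ((E^^k) p) q = A p ((E^^k) q)" if "p \<in> D" "q \<in> D" for k p q
    using that
  proof (induction k arbitrary: q)
    case 0 then show ?case by simp
  next
    case (Suc k)
    have "A ((E^^Suc k) p) q = A (E ((E^^k) p)) q" by simp
    also have "\<dots> = A ((E^^k) p) (E q)" using hyp[OF EkD[OF Suc.prems(1)]] by simp
    also have "\<dots> = A p ((E^^k) (E q))" using Suc ED by simp
    also have "(E^^k) (E q) = (E^^Suc k) q" by (simp add: funpow_swap1)
    finally show ?case .
  qed
  obtain K where K: "K > 0" "\<And>z. norm (E z) \<le> K * norm z"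
    using assms(6) unfolding bounded_clinear_op_def
    using bounded_linear.pos_bounded by (metis mult.commute)
  have Kn: "norm ((E^^k) z) \<le> K^k * norm z" for k z
  proof (induction k)
    case 0 then show ?case by simp
  next
    case (Suc k)
    have "norm ((E^^Suc k) z) \<le> K * norm ((E^^k) z)" using K(2) by simp
    also have "\<dots> \<le> K * (K^k * norm z)" using Suc K(1) by simp
    finally show ?case by simp
  qed
  have bound: "HA_norm A (E x) \<le> K * HA_norm A x" if x: "x \<in> D" for x
  proof -
    define a where "a k = Re (A ((E^^k) x) ((E^^k) x))" for k
    have ann: "a k \<ge> 0" for k using pos EkD[OF x] unfolding a_def positive_op_def by blast
    have conv: "(a (Suc n))^2 \<le> a n * a (Suc (Suc n))" for n
    proof -
      let ?u = "(E^^n) x" and ?v = "(E^^Suc (Suc n)) x"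
      have uD: "?u \<in> D" and vD: "?v \<in> D" using EkD[OF x] by blast+
      have v0: "?v = (E^^(2+n)) x" by simp
      have v: "?v = (E^^2) ?u" unfolding v0 by (simp only: funpow_add o_apply)
      have s: "A ?u ?v = A ?v ?u" using symm[OF uD uD, of 2] v by simp
      have e: "A ?u ?v = A ((E^^Suc n) x) ((E^^Suc n) x)"
      proof -
        have "?v = E (E ?u)" using v by (simp add: numeral_2_eq_2)
        then have "A ?u ?v = A (E ?u) (E ?u)" using hyp[OF uD] by simp
        then show ?thesis by simp
      qed
      have im: "Im (A ?u ?v) = 0" using e pos EkD[OF x, of "Suc n"] unfolding positive_op_def by simp
      have "(Re (A ?u ?v))^2 \<le> Re (A ?u ?u) * Re (A ?v ?v)"
        by (rule cs_real[OF lin pos uD vD s im])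
      then show ?thesis using e unfolding a_def by simp
    qed
    obtain M where M: "\<And>z. cmod (A x z) \<le> M * norm z"
      using lin x unfolding lin_op_dual_def cdual_def by blast
    define M' where "M' = max M 0"
    have abound: "a k \<le> (M' * norm x) * (K^2)^k" for k
    proof -
      have "a k \<le> cmod (A ((E^^k) x) ((E^^k) x))" unfolding a_def by (rule complex_Re_le_cmod)
      also have "A ((E^^k) x) ((E^^k) x) = A x ((E^^k) ((E^^k) x))" using symm[OF x EkD[OF x]] .
      also have "(E^^k) ((E^^k) x) = (E^^(k+k)) x" by (simp add: funpow_add)
      also have "cmod (A x ((E^^(k+k)) x)) \<le> M * norm ((E^^(k+k)) x)" by (rule M)
      also have "\<dots> \<le> M' * norm ((E^^(k+k)) x)" unfolding M'_def
        by (simp add: mult_right_mono)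
      also have "\<dots> \<le> M' * (K^(k+k) * norm x)" unfolding M'_def
        by (rule mult_left_mono[OF Kn]) simp
      also have "K^(k+k) = (K^2)^k" by (simp add: power_mult[symmetric] mult_2[symmetric] mult.commute)
      finally show ?thesis by (simp add: algebra_simps)
    qed
    have main: "a 1 \<le> K^2 * a 0"
    proof (cases "a 1 = 0")
      case True then show ?thesis using ann[of 0] by simp
    next
      case False
      then have a1: "a 1 > 0" using ann[of 1] by simp
      have a0: "a 0 > 0"
      proof (rule ccontr)
        assume "\<not> a 0 > 0" then have "a 0 = 0" using ann[of 0] by simp
        then show False using conv[of 0] a1 by simp
      qed
      define r where "r = a 1 / a 0"
      have Q: "a n > 0 \<and> a (Suc n) > 0 \<and> a (Suc n) \<ge> r * a n \<and> a n \<ge> r^n * a 0" for n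
      proof (induction n)
        case 0 then show ?case using a0 a1 unfolding r_def by simp
      next
        case (Suc n)
        then have p: "a n > 0" "a (Suc n) > 0" "a (Suc n) \<ge> r * a n" "a n \<ge> r^n * a 0" by auto
        have "r \<ge> 0" unfolding r_def using a0 a1 by simp
        have c: "a (Suc n) * a (Suc n) \<le> a n * a (Suc (Suc n))" using conv[of n] by (simp add: power2_eq_square)
        have "a n * (r * a (Suc n)) \<le> a (Suc n) * a (Suc n)"
          using p(3) p(2) by (simp add: mult_right_mono algebra_simps)
        then have "a n * (r * a (Suc n)) \<le> a n * a (Suc (Suc n))" using c by linarith
        then have s2: "r * a (Suc n) \<le> a (Suc (Suc n))" using p(1) by simp
        have pos2: "a (Suc (Suc n)) > 0"
        proof -
          have "0 < a (Suc n) * a (Suc n)" using p(2) by simp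
          then have "0 < a n * a (Suc (Suc n))" using c by linarith
          then show ?thesis using p(1) by (simp add: zero_less_mult_iff)
        qed
        have "r^(Suc n) * a 0 = r * (r^n * a 0)" by simp
        also have "\<dots> \<le> r * a n" using p(4) \<open>r \<ge> 0\<close> by (simp add: mult_left_mono)
        also have "\<dots> \<le> a (Suc n)" using p(3) .
        finally show ?case using p pos2 s2 by simp
      qed
      show ?thesis
      proof (rule ccontr)
        assume "\<not> a 1 \<le> K^2 * a 0"
        then have "r > K^2" unfolding r_def using a0 by (simp add: field_simps)
        then have gt: "r / K^2 > 1" using K(1) by simp
        obtain n where n: "M' * norm x / a 0 < (r / K^2)^n" using real_arch_pow[OF gt] by blast
        have "r^n * a 0 \<le> (M' * norm x) * (K^2)^n" using Q[of n] abound[of n] by linarith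
        then have "(r / K^2)^n * a 0 \<le> M' * norm x" using K(1)
          by (simp add: power_divide field_simps)
        then have "(r / K^2)^n \<le> M' * norm x / a 0" using a0 by (simp add: field_simps)
        then show False using n by simp
      qed
    qed
    have "HA_norm A (E x) = sqrt (a 1)" unfolding HA_norm_def a_def by simp
    also have "\<dots> \<le> sqrt (K^2 * a 0)" using main by simp
    also have "\<dots> = K * sqrt (a 0)" using K(1) by (simp add: real_sqrt_mult)
    also have "sqrt (a 0) = HA_norm A x" unfolding HA_norm_def a_def by simp
    finally show ?thesis .
  qed
  show ?thesis
  proof (intro exI[of _ "\<lambda>u z. u (E z)"] conjI)
    show "\<forall>x\<in>D. (\<lambda>z. A x (E z)) = A (E x)" using assms(8) by blast
    show "\<exists>C\<ge>0. \<forall>x\<in>D. HA_norm A (E x) \<le> C * HA_norm A x"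
      using bound K(1) by (intro exI[of _ K]) auto
  qed auto
qed

end
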